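(* Let $t,t'\in B_n$ with $t\neq t'$, let $G$ be a digraph such that $\mathbb{A}(G)$ satisfies $t\approx t'$, and write $L=L_{t,t'}$, $\lambda=\lambda_{t,t'}$. Assume that $E_G=L+1$, that $u_0\to u_1\to\dots\to u_L\to u_{L+1}$ is an entryway to a nontrivial strongly connected component $K$, that $w$ is a vertex of $K$ with $(w,u_{L+1})\in E(G)$, and that $v_0\to v_1\to\dots\to v_\lambda$ is a walk in $G$. Then $(w,v_0)$ is an edge if and only if $(u_L,v_0)$ is an edge. Consequently, $\lambda_G<\lambda_{t,t'}$.
   Context: Digraphs $G=(V,E)$ have $E\subseteq V\times V$, loops allowed, possibly infinite. $\mathbb{A}(G)$ is the groupoid on $V\cup\{\infty\}$ with $xy=x$ if $x,y\in V$, $(x,y)\in E$, and $xy=\infty$ otherwise. $B_n$: binary terms with $x_1,\dots,x_n$ each occurring once in this order; $G(t)$: rooted tree defined by $G(x_i)$ a single vertex and $G(t_1t_2)=G(t_1)\cup G(t_2)$ plus an edge from the leftmost variable of $t_1$ to that of $t_2$; root $x_1$. $d_T$ is depth, $h$ height, $T_x$ the rooted induced subtree of $x$ and its descendants. With $T=G(t)$, $T'=G(t')$: $L_{t,t'}$ is the largest $m$ such that for all $x$, $d_T(x)\le m$ or $d_{T'}(x)\le m$ implies $d_T(x)=d_{T'}(x)$; $\Lambda=\{x:d_T(x)\ne d_{T'}(x),\ L_{t,t'}+1\in\{d_T(x),d_{T'}(x)\}\}$ and $\lambda_{t,t'}=\min\{\max(h(T_x),h(T'_x)):x\in\Lambda\}$.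 A strongly connected component (SCC) is trivial if it is a single vertex without a loop, nontrivial otherwise. A path $v_0\to\dots\to v_\ell$ is an entryway to a nontrivial SCC $K$ if $v_0,\dots,v_{\ell-1}$ lie in trivial SCCs and $v_\ell\in K$; $E_G$ is the maximal length of an entryway ($\infty$ if unbounded, $-\infty$ if none). $\lambda_G$ is the largest integer $m$ such that there exist an entryway $u_0\to\dots\to u_{E_G}$ to a nontrivial SCC $K$, a vertex $w\in K$ with $(w,u_{E_G})\in E$, and a walk $v_0\to\dots\to v_m$ such that exactly one of $(w,v_0)$, $(u_{E_G-1},v_0)$ is an edge ($\infty$ if unbounded, $-\infty$ if no such $m$). *)

theory Defs
  imports Main "HOL-Library.Extended_Real"
begin

datatype bterm = Var nat | App bterm bterm

fun leaves :: "bterm \<Rightarrow> nat list" where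
  "leaves (Var i) = [i]"
| "leaves (App a b) = leaves a @ leaves b"

definition B :: "nat \<Rightarrow> bterm set" where
  "B n = {t. leaves t = [1..<Suc n]}"

section \<open>The groupoid A(G); the point infinity is None\<close>

fun gmult :: "('a \<times> 'a) set \<Rightarrow> 'a option \<Rightarrow> 'a option \<Rightarrow> 'a option" where
  "gmult E (Some x) (Some y) = (if (x, y) \<in> E then Some x else None)"
| "gmult E _ _ = None"

definition gcarrier :: "'a set \<Rightarrow> 'a option set" where
  "gcarrier V = Some ` V \<union> {None}"

fun geval :: "('a \<times> 'a) set \<Rightarrow> (nat \<Rightarrow> 'a option) \<Rightarrow> bterm \<Rightarrow> 'a option" where
  "geval E a (Var i) = a i"
| "geval E a (App s u) = gmult E (geval E a s) (geval E a u)"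

definition satisfies :: "'a set \<Rightarrow> ('a \<times> 'a) set \<Rightarrow> bterm \<Rightarrow> bterm \<Rightarrow> bool" where
  "satisfies V E t t' \<longleftrightarrow>
     (\<forall>a. (\<forall>i. a i \<in> gcarrier V) \<longrightarrow> geval E a t = geval E a t')"

fun lm :: "bterm \<Rightarrow> nat" where
  "lm (Var i) = i"
| "lm (App a b) = lm a"

fun tedges :: "bterm \<Rightarrow> (nat \<times> nat) set" where
  "tedges (Var i) = {}"
| "tedges (App a b) = tedges a \<union> tedges b \<union> {(lm a, lm b)}"

definition depth :: "bterm \<Rightarrow> nat \<Rightarrow> nat" where
  "depth t x = (LEAST k. (lm t, x) \<in> tedges t ^^ k)"

definition subheight :: "bterm \<Rightarrow> nat \<Rightarrow> nat" where
  "subheight t x = Max {k. \<exists>y. (x, y) \<in> tedges t ^^ k}"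

definition Lt :: "bterm \<Rightarrow> bterm \<Rightarrow> nat" where
  "Lt t t' = (GREATEST m. \<forall>x\<in>set (leaves t).
       (depth t x \<le> m \<or> depth t' x \<le> m) \<longrightarrow> depth t x = depth t' x)"

definition Lambda_set :: "bterm \<Rightarrow> bterm \<Rightarrow> nat set" where
  "Lambda_set t t' = {x \<in> set (leaves t). depth t x \<noteq> depth t' x \<and>
       Lt t t' + 1 \<in> {depth t x, depth t' x}}"

definition lambdat :: "bterm \<Rightarrow> bterm \<Rightarrow> nat" where
  "lambdat t t' = Min ((\<lambda>x. max (subheight t x) (subheight t' x)) ` Lambda_set t t')"

definition walk :: "'a set \<Rightarrow> ('a \<times> 'a) set \<Rightarrow> (nat \<Rightarrow> 'a) \<Rightarrow> nat \<Rightarrow> bool" where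
  "walk V E v l \<longleftrightarrow> v 0 \<in> V \<and> (\<forall>i<l. (v i, v (Suc i)) \<in> E)"

definition scc :: "'a set \<Rightarrow> ('a \<times> 'a) set \<Rightarrow> 'a \<Rightarrow> 'a set" where
  "scc V E x = {y \<in> V. (x, y) \<in> E\<^sup>* \<and> (y, x) \<in> E\<^sup>*}"

definition is_scc :: "'a set \<Rightarrow> ('a \<times> 'a) set \<Rightarrow> 'a set \<Rightarrow> bool" where
  "is_scc V E K \<longleftrightarrow> (\<exists>x\<in>V. K = scc V E x)"

definition trivial_scc :: "'a set \<Rightarrow> ('a \<times> 'a) set \<Rightarrow> 'a set \<Rightarrow> bool" where
  "trivial_scc V E K \<longleftrightarrow> (\<exists>x. K = {x} \<and> (x, x) \<notin> E)"

definition nontrivial_scc :: "'a set \<Rightarrow> ('a \<times> 'a) set \<Rightarrow> 'a set \<Rightarrow> bool" where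
  "nontrivial_scc V E K \<longleftrightarrow> is_scc V E K \<and> \<not> trivial_scc V E K"

definition entryway :: "'a set \<Rightarrow> ('a \<times> 'a) set \<Rightarrow> (nat \<Rightarrow> 'a) \<Rightarrow> nat \<Rightarrow> 'a set \<Rightarrow> bool" where
  "entryway V E v l K \<longleftrightarrow> walk V E v l \<and> nontrivial_scc V E K \<and>
     (\<forall>i<l. trivial_scc V E (scc V E (v i))) \<and> v l \<in> K"

text \<open>E_G as an extended real: Sup of the empty set is -\<infinity>, unbounded gives \<infinity>.\<close>
definition EG :: "'a set \<Rightarrow> ('a \<times> 'a) set \<Rightarrow> ereal" where
  "EG V E = Sup {ereal (real l) | l. \<exists>v K. entryway V E v l K}"

definition lambdaG :: "'a set \<Rightarrow> ('a \<times> 'a) set \<Rightarrow> ereal" where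
  "lambdaG V E = Sup {ereal (real m) | m. \<exists>u l K w v.
      ereal (real l) = EG V E \<and> 1 \<le> l \<and> entryway V E u l K \<and> w \<in> K \<and>
      (w, u l) \<in> E \<and> walk V E v m \<and>
      (((w, v 0) \<in> E) \<noteq> ((u (l - 1), v 0) \<in> E))}"

end

theory Submission
  imports Defs
begin

lemma leaves_ne: "leaves t \<noteq> []" by (induction t) auto
lemma lm_hd: "lm t = hd (leaves t)" by (induction t) (auto simp: leaves_ne)
lemma lm_in: "lm t \<in> set (leaves t)" by (induction t) auto
lemma tedges_sub: "(p,i) \<in> tedges t \<Longrightarrow> p \<in> set (leaves t) \<and> i \<in> set (leaves t)"
  by (induction t) (auto simp: lm_in)
lemma tedges_lt: "sorted_wrt (<) (leaves t) \<Longrightarrow> (p,i) \<in> tedges t \<Longrightarrow> p < i"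
  by (induction t) (auto simp: sorted_wrt_append lm_in)
lemma tedges_noroot: "distinct (leaves t) \<Longrightarrow> (j, lm t) \<notin> tedges t"
proof (induction t)
  case (Var x)
  then show ?case by simp
next
  case (App a b)
  then have "lm a \<noteq> lm b" using lm_in[of a] lm_in[of b] by auto
  moreover have "(j, lm a) \<notin> tedges b" using App.prems lm_in[of a] tedges_sub[of j "lm a" b] by auto
  ultimately show ?case using App by auto
qed
lemma tedges_upar: "distinct (leaves t) \<Longrightarrow> (p,i) \<in> tedges t \<Longrightarrow> (q,i) \<in> tedges t \<Longrightarrow> p = q"
proof (induction t)
  case (Var x)
  then show ?case by simp
next
  case (App a b)
  from App.prems(1) have da: "distinct (leaves a)" and db: "distinct (leaves b)"
    and dj: "set (leaves a) \<inter> set (leaves b) = {}" by auto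
  have nb: "\<And>j. (j, lm b) \<notin> tedges b" using tedges_noroot[OF db] .
  show ?case
  proof (cases "i \<in> set (leaves a)")
    case True
    then have "i \<notin> set (leaves b)" using dj by auto
    then have "(p,i) \<in> tedges a" "(q,i) \<in> tedges a" using App.prems(2,3) tedges_sub[of _ i b] lm_in[of b] by auto
    then show ?thesis using App.IH(1)[OF da] by blast
  next
    case False
    then have ni: "(p,i) \<notin> tedges a" "(q,i) \<notin> tedges a" using tedges_sub[of _ i a] by auto
    show ?thesis
    proof (cases "i = lm b")
      case True
      then show ?thesis using App.prems(2,3) ni nb by auto
    next
      case False
      then have "(p,i) \<in> tedges b" "(q,i) \<in> tedges b" using App.prems(2,3) ni by auto
      then show ?thesis using App.IH(2)[OF db] by blast
    qed
  qed
qed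
lemma tedges_reach: "i \<in> set (leaves t) \<Longrightarrow> (lm t, i) \<in> (tedges t)\<^sup>*"
proof (induction t)
  case (Var x)
  then show ?case by simp
next
  case (App a b)
  show ?case
  proof (cases "i \<in> set (leaves a)")
    case True
    then show ?thesis using App.IH(1) rtrancl_mono[of "tedges a" "tedges (App a b)"] by auto
  next
    case False
    then have "i \<in> set (leaves b)" using App.prems by simp
    then have "(lm b, i) \<in> (tedges (App a b))\<^sup>*"
      using App.IH(2) rtrancl_mono[of "tedges b" "tedges (App a b)"] by auto
    moreover have "(lm a, lm b) \<in> tedges (App a b)" by simp
    ultimately have "(lm a, i) \<in> (tedges (App a b))\<^sup>*" by (rule converse_rtrancl_into_rtrancl[rotated])
    then show ?thesis by simp
  qed
qed

lemma pathlen_unique: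
  assumes up: "\<And>p q i. (p,i) \<in> R \<Longrightarrow> (q,i) \<in> R \<Longrightarrow> p = q"
    and nr: "\<And>j. (j, r) \<notin> R"
  shows "(r,i) \<in> R ^^ k \<Longrightarrow> (r,i) \<in> R ^^ m \<Longrightarrow> k = m"
proof (induction k arbitrary: i m)
  case 0
  then have "i = r" by simp
  then show ?case using 0 nr by (cases m) (auto elim: relpow_Suc_E)
next
  case (Suc k)
  from Suc.prems(1) obtain q where q1: "(r,q) \<in> R ^^ k" "(q,i) \<in> R" by (auto elim: relpow_Suc_E)
  show ?case
  proof (cases m)
    case 0
    then show ?thesis using Suc.prems q1 nr by auto
  next
    case (Suc m')
    with Suc.prems(2) obtain q' where "(r,q') \<in> R ^^ m'" "(q',i) \<in> R" by (auto elim: relpow_Suc_E)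
    with q1 up have "q = q'" by blast
    then show ?thesis using Suc.IH q1 \<open>(r,q') \<in> R ^^ m'\<close> \<open>m = Suc m'\<close> by auto
  qed
qed

lemma depth_eq: "distinct (leaves t) \<Longrightarrow> (lm t, i) \<in> (tedges t) ^^ k \<Longrightarrow> depth t i = k"
  unfolding depth_def
  apply (rule Least_equality, assumption)
  using pathlen_unique[of "tedges t" "lm t" i k] tedges_upar tedges_noroot by fastforce

lemma depth_reach: "distinct (leaves t) \<Longrightarrow> i \<in> set (leaves t) \<Longrightarrow> (lm t, i) \<in> (tedges t) ^^ (depth t i)"
  using tedges_reach[of i t] depth_eq by (metis rtrancl_power)

lemma depth_edge: "distinct (leaves t) \<Longrightarrow> (p,i) \<in> tedges t \<Longrightarrow> depth t i = Suc (depth t p)"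
  using depth_reach[of t p] tedges_sub[of p i t] depth_eq relpow_Suc_I by metis

lemma depth_desc: "distinct (leaves t) \<Longrightarrow> x \<in> set (leaves t) \<Longrightarrow> (x,i) \<in> (tedges t) ^^ k \<Longrightarrow> depth t i = depth t x + k"
  using depth_reach[of t x] depth_eq relpow_trans by metis

lemma depth_root: "depth t (lm t) = 0"
  unfolding depth_def by simp

lemma depth0: "distinct (leaves t) \<Longrightarrow> i \<in> set (leaves t) \<Longrightarrow> depth t i = 0 \<Longrightarrow> i = lm t"
  using depth_reach[of t i] by simp

lemma parent_ex: "distinct (leaves t) \<Longrightarrow> i \<in> set (leaves t) \<Longrightarrow> depth t i = Suc d \<Longrightarrow> \<exists>p. (p,i) \<in> tedges t \<and> depth t p = d"
  using depth_reach[of t i] by (metis relpow_Suc_E depth_eq)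

lemma relpow_mono_sub: "(R::('a\<times>'a) set) \<subseteq> S \<Longrightarrow> (x,y) \<in> R ^^ k \<Longrightarrow> (x,y) \<in> S ^^ k"
proof (induction k arbitrary: y)
  case 0
  then show ?case by simp
next
  case (Suc k)
  then obtain q where "(x,q) \<in> R ^^ k" "(q,y) \<in> R" by (auto elim: relpow_Suc_E)
  moreover have "(q,y) \<in> S" using Suc.prems(1) \<open>(q,y) \<in> R\<close> by blast
  ultimately show ?case using Suc.IH[OF Suc.prems(1)] relpow_Suc_I by metis
qed

lemma depth_App_l: "distinct (leaves (App a b)) \<Longrightarrow> i \<in> set (leaves a) \<Longrightarrow> depth (App a b) i = depth a i"
proof -
  assume d: "distinct (leaves (App a b))" and i: "i \<in> set (leaves a)"
  then have r: "(lm a, i) \<in> (tedges a) ^^ depth a i" using depth_reach[of a i] by simp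
  have sub: "tedges a \<subseteq> tedges (App a b)" by auto
  have "(lm a, i) \<in> (tedges (App a b)) ^^ depth a i"
    by (rule relpow_mono_sub[OF sub r])
  then have "(lm (App a b), i) \<in> (tedges (App a b)) ^^ depth a i" by (simp only: lm.simps)
  then show ?thesis by (rule depth_eq[OF d])
qed

lemma depth_App_r: "distinct (leaves (App a b)) \<Longrightarrow> i \<in> set (leaves b) \<Longrightarrow> depth (App a b) i = Suc (depth b i)"
proof -
  assume d: "distinct (leaves (App a b))" and i: "i \<in> set (leaves b)"
  then have r: "(lm b, i) \<in> (tedges b) ^^ depth b i" using depth_reach[of b i] by simp
  have sub: "tedges b \<subseteq> tedges (App a b)" by auto
  have "(lm b, i) \<in> (tedges (App a b)) ^^ depth b i"
    by (rule relpow_mono_sub[OF sub r])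
  moreover have "(lm a, lm b) \<in> tedges (App a b)" by simp
  ultimately have "(lm a, i) \<in> (tedges (App a b)) ^^ Suc (depth b i)"
    by (rule relpow_Suc_I2[rotated])
  then have "(lm (App a b), i) \<in> (tedges (App a b)) ^^ Suc (depth b i)" by (simp only: lm.simps)
  then show ?thesis by (rule depth_eq[OF d])
qed

lemma split_contra:
  assumes d: "distinct (la @ lb)" and e: "la @ lb = la' @ lb'" and lt: "length la < length la'"
    and la: "leaves a = la" and lb: "leaves b = lb" and la': "leaves a' = la'" and lb': "leaves b' = lb'"
    and dep: "\<forall>i\<in>set (la @ lb). depth (App a b) i = depth (App a' b') i"
  shows False
proof -
  obtain us where us: "la = la' @ us \<and> us @ lb = lb' \<or> la @ us = la' \<and> lb = us @ lb'"
    using append_eq_append_conv2[THEN iffD1, OF e] by blast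
  have "\<not> (la = la' @ us)" using lt by auto
  then have m: "la' = la @ us" "lb = us @ lb'" using us by auto
  have mne: "us \<noteq> []" using m lt by auto
  have d': "distinct (leaves (App a' b'))" using d e la' lb' by simp
  have d1: "distinct (leaves (App a b))" using d la lb by simp
  have dlb: "distinct lb" using d by simp
  have db: "distinct (leaves b)" using dlb lb by simp
  have lmb': "lm b' \<in> set lb'" using lm_in[of b'] lb' by simp
  have x_in: "lm b' \<in> set lb" using m lmb' by simp
  have disj: "set us \<inter> set lb' = {}" using dlb m by simp
  have hb: "lm b = hd us" using lm_hd[of b] lb m mne by simp
  have hu: "hd us \<in> set us" using mne by simp
  have ne: "lm b \<noteq> lm b'"
  proof
    assume "lm b = lm b'"
    then have "lm b' \<in> set us" using hb hu by simp
    then show False using disj lmb' by blast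
  qed
  have inb: "lm b' \<in> set (leaves b)" using x_in lb by simp
  have "depth b (lm b') \<noteq> 0"
  proof
    assume "depth b (lm b') = 0"
    then have "lm b' = lm b" by (rule depth0[OF db inb])
    then show False using ne by simp
  qed
  moreover have "depth (App a b) (lm b') = Suc (depth b (lm b'))" by (rule depth_App_r[OF d1 inb])
  ultimately have n1: "depth (App a b) (lm b') \<noteq> Suc 0" by simp
  have inb': "lm b' \<in> set (leaves b')" by (rule lm_in)
  have "depth (App a' b') (lm b') = Suc (depth b' (lm b'))" by (rule depth_App_r[OF d' inb'])
  then have n2: "depth (App a' b') (lm b') = Suc 0" by (simp add: depth_root)
  have "lm b' \<in> set (la @ lb)" using x_in by simp
  then have "depth (App a b) (lm b') = depth (App a' b') (lm b')" using dep by blast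
  then show False using n1 n2 by simp
qed

lemma depth_inj: "distinct (leaves t) \<Longrightarrow> leaves t' = leaves t \<Longrightarrow> (\<forall>i\<in>set (leaves t). depth t i = depth t' i) \<Longrightarrow> t = t'"
proof (induction t arbitrary: t')
  case (Var x)
  show ?case
  proof (cases t')
    case (Var y)
    then show ?thesis using Var.prems(2) \<open>t' = Var y\<close> by simp
  next
    case (App a b)
    have "length (leaves t') = 1" using Var.prems(2) by simp
    moreover have "length (leaves a) \<ge> 1" "length (leaves b) \<ge> 1"
      using leaves_ne[of a] leaves_ne[of b] by (simp_all add: Suc_leI)
    ultimately show ?thesis using App by simp
  qed
next
  case (App a b)
  show ?case
  proof (cases t')
    case (Var y)
    have "length (leaves t') = 1" using Var by simp
    moreover have "length (leaves a) \<ge> 1" "length (leaves b) \<ge> 1"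
      using leaves_ne[of a] leaves_ne[of b] by (simp_all add: Suc_leI)
    ultimately show ?thesis using App.prems(2) by simp
  next
    case (App a' b')
    have e: "leaves a @ leaves b = leaves a' @ leaves b'" using App App.prems(2) by simp
    have dep: "\<forall>i\<in>set (leaves a @ leaves b). depth (App a b) i = depth (App a' b') i" using App.prems(3) App by simp
    have dep': "\<forall>i\<in>set (leaves a' @ leaves b'). depth (App a' b') i = depth (App a b) i" using dep e by simp
    have dd: "distinct (leaves a @ leaves b)" using App.prems(1) by simp
    have dd': "distinct (leaves a' @ leaves b')" using dd e by simp
    have e': "leaves a' @ leaves b' = leaves a @ leaves b" using e by simp
    have "\<not> length (leaves a) < length (leaves a')"
    proof
      assume lt: "length (leaves a) < length (leaves a')"
      show False by (rule split_contra[OF dd e lt refl refl refl refl dep])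
    qed
    moreover have "\<not> length (leaves a') < length (leaves a)"
    proof
      assume lt: "length (leaves a') < length (leaves a)"
      show False by (rule split_contra[OF dd' e' lt refl refl refl refl dep'])
    qed
    ultimately have "length (leaves a) = length (leaves a')" by simp
    then have la: "leaves a = leaves a'" and lb: "leaves b = leaves b'"
      using append_eq_append_conv[of "leaves a" "leaves a'" "leaves b" "leaves b'"] e by simp_all
    have d: "distinct (leaves (App a b))" using App.prems(1) by simp
    have d': "distinct (leaves (App a' b'))" using App.prems(1) e by simp
    have "a = a'"
    proof (rule App.IH(1))
      show "distinct (leaves a)" using d by simp
      show "leaves a' = leaves a" using la by simp
      show "\<forall>i\<in>set (leaves a). depth a i = depth a' i"
      proof
        fix i assume i: "i \<in> set (leaves a)"
        then have i': "i \<in> set (leaves a')" using la by simp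
        have "depth a i = depth (App a b) i" using depth_App_l[OF d i] by simp
        also have "\<dots> = depth (App a' b') i" using dep i by simp
        also have "\<dots> = depth a' i" using depth_App_l[OF d' i'] by simp
        finally show "depth a i = depth a' i" .
      qed
    qed
    moreover have "b = b'"
    proof (rule App.IH(2))
      show "distinct (leaves b)" using d by simp
      show "leaves b' = leaves b" using lb by simp
      show "\<forall>i\<in>set (leaves b). depth b i = depth b' i"
      proof
        fix i assume i: "i \<in> set (leaves b)"
        then have i': "i \<in> set (leaves b')" using lb by simp
        have "Suc (depth b i) = depth (App a b) i" using depth_App_r[OF d i] by simp
        also have "\<dots> = depth (App a' b') i" using dep i by simp
        also have "\<dots> = Suc (depth b' i)" using depth_App_r[OF d' i'] by simp
        finally show "depth b i = depth b' i" by simp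
      qed
    qed
    ultimately show ?thesis using App by simp
  qed
qed

definition ghom :: "('a \<times> 'a) set \<Rightarrow> (nat \<Rightarrow> 'a) \<Rightarrow> (nat \<times> nat) set \<Rightarrow> bool" where
  "ghom E f T \<longleftrightarrow> (\<forall>p i. (p,i) \<in> T \<longrightarrow> (f p, f i) \<in> E)"

lemma geval_hom: "geval E (\<lambda>i. Some (f i)) t = (if ghom E f (tedges t) then Some (f (lm t)) else None)"
  by (induction t) (auto simp: ghom_def)

lemma sat_hom:
  assumes "satisfies V E t t'" "lm t = lm t'" "\<forall>i. f i \<in> V"
  shows "ghom E f (tedges t) \<longleftrightarrow> ghom E f (tedges t')"
proof -
  have "geval E (\<lambda>i. Some (f i)) t = geval E (\<lambda>i. Some (f i)) t'"
    using assms(1,3) unfolding satisfies_def gcarrier_def by auto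
  then show ?thesis using assms(2) by (auto simp: geval_hom split: if_splits)
qed

lemma B_leaves: "t \<in> B n \<Longrightarrow> leaves t = [1..<Suc n]" by (simp add: B_def)
lemma B_distinct: "t \<in> B n \<Longrightarrow> distinct (leaves t)" by (simp add: B_def)
lemma B_lm: "t \<in> B n \<Longrightarrow> lm t = 1"
proof -
  assume a: "t \<in> B n"
  then have l: "leaves t = [1..<Suc n]" by (simp add: B_def)
  then have "n \<ge> 1" using leaves_ne[of t] by (cases n) auto
  then have "[1..<Suc n] = 1 # [Suc 1..<Suc n]" using upt_rec by auto
  then show ?thesis using lm_hd[of t] l by simp
qed
lemma B_lt: "t \<in> B n \<Longrightarrow> (p,i) \<in> tedges t \<Longrightarrow> p < i"
proof -
  assume a: "t \<in> B n" "(p,i) \<in> tedges t"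
  have "sorted_wrt (<) (leaves t)" by (simp only: B_leaves[OF a(1)] sorted_wrt_upt)
  then show ?thesis using tedges_lt a(2) by blast
qed

lemma B_relpow_le: "t \<in> B n \<Longrightarrow> (x,y) \<in> (tedges t) ^^ k \<Longrightarrow> x + k \<le> y"
proof (induction k arbitrary: y)
  case 0
  then show ?case by simp
next
  case (Suc k)
  then obtain q where "(x,q) \<in> (tedges t) ^^ k" "(q,y) \<in> tedges t" by (auto elim: relpow_Suc_E)
  then show ?case using Suc.IH Suc.prems B_lt[of t n q y] by fastforce
qed

lemma B_rtrancl_le: "t \<in> B n \<Longrightarrow> (x,y) \<in> (tedges t)\<^sup>* \<Longrightarrow> x \<le> y"
  using B_relpow_le by (metis le_add1 le_trans rtrancl_power)

lemma subheight_ge: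
  assumes "t \<in> B n" "x \<in> set (leaves t)" "(x,y) \<in> (tedges t) ^^ k"
  shows "k \<le> subheight t x"
proof -
  have "{k. \<exists>y. (x, y) \<in> tedges t ^^ k} \<subseteq> {..n}"
  proof
    fix k assume "k \<in> {k. \<exists>y. (x, y) \<in> tedges t ^^ k}"
    then obtain y where y: "(x, y) \<in> tedges t ^^ k" by auto
    then have "x + k \<le> y" using B_relpow_le assms(1) by blast
    moreover have "y \<le> n"
    proof (cases k)
      case 0
      then show ?thesis using y assms B_leaves[of t n] by auto
    next
      case (Suc k')
      then obtain q where "(q,y) \<in> tedges t" using y by (auto elim: relpow_Suc_E)
      then show ?thesis using tedges_sub[of q y t] assms B_leaves[of t n] by auto
    qed
    ultimately show "k \<in> {..n}" by auto
  qed
  then have "finite {k. \<exists>y. (x, y) \<in> tedges t ^^ k}" using finite_subset by blast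
  then show ?thesis unfolding subheight_def using assms(3) by (auto intro: Max_ge)
qed

definition SATp :: "'a set \<Rightarrow> ('a \<times> 'a) set \<Rightarrow> bterm \<Rightarrow> bterm \<Rightarrow> bool" where
  "SATp V E Ot Pt \<longleftrightarrow> (\<forall>f. (\<forall>i. f i \<in> V) \<longrightarrow> (ghom E f (tedges Ot) \<longleftrightarrow> ghom E f (tedges Pt)))"

definition LPp :: "nat \<Rightarrow> bterm \<Rightarrow> bterm \<Rightarrow> bool" where
  "LPp L Ot Pt \<longleftrightarrow> (\<forall>i\<in>set (leaves Ot). (depth Ot i \<le> L \<or> depth Pt i \<le> L) \<longrightarrow> depth Ot i = depth Pt i)"

lemma SATpD: "SATp V E Ot Pt \<Longrightarrow> (\<forall>i. f i \<in> V) \<Longrightarrow> ghom E f (tedges Ot) \<longleftrightarrow> ghom E f (tedges Pt)"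
  unfolding SATp_def by blast

lemma SATp_sym: "SATp V E Ot Pt \<Longrightarrow> SATp V E Pt Ot" unfolding SATp_def by blast

lemma LPp_sym: "Ot \<in> B n \<Longrightarrow> Pt \<in> B n \<Longrightarrow> LPp L Ot Pt \<Longrightarrow> LPp L Pt Ot"
  unfolding LPp_def using B_leaves by metis

lemma key:
  fixes \<alpha> \<beta> z :: "nat \<Rightarrow> 'a"
  assumes \<alpha>V: "\<And>k. \<alpha> k \<in> V" and \<alpha>E: "\<And>k. k < L \<Longrightarrow> (\<alpha> k, \<alpha> (Suc k)) \<in> E" and \<alpha>L: "\<alpha> L = a"
    and \<beta>V: "\<And>k. \<beta> k \<in> V" and \<beta>E: "\<And>k. k < L \<Longrightarrow> (\<beta> k, \<beta> (Suc k)) \<in> E" and \<beta>L: "\<beta> L = b"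
    and zV: "\<And>k. z k \<in> V" and zE: "\<And>k. (z k, z (Suc k)) \<in> E" and z0: "z 0 = c"
    and ac: "(a, c) \<in> E" and bc: "(b, c) \<in> E"
  shows "Ot \<in> B n \<Longrightarrow> Pt \<in> B n \<Longrightarrow> SATp V E Ot Pt \<Longrightarrow> LPp L Ot Pt \<Longrightarrow> x \<in> set (leaves Ot) \<Longrightarrow>
    depth Ot x = Suc L \<Longrightarrow> depth Pt x \<noteq> Suc L \<Longrightarrow> (\<forall>i. \<phi> i \<in> V) \<Longrightarrow>
    (\<forall>p i. (p,i) \<in> tedges Ot \<longrightarrow> (x,p) \<in> (tedges Ot)\<^sup>* \<longrightarrow> (\<phi> p, \<phi> i) \<in> E) \<Longrightarrow>
    (a, \<phi> x) \<in> E \<Longrightarrow> (b, \<phi> x) \<in> E"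
proof (induction "n - x" arbitrary: Ot Pt x \<phi> rule: less_induct)
  case less
  note OB = less.prems(1) and PB = less.prems(2) and sat = less.prems(3) and lp = less.prems(4)
    and xin = less.prems(5) and dx = less.prems(6) and dPx = less.prems(7) and \<phi>V = less.prems(8)
    and \<phi>E = less.prems(9) and a\<phi> = less.prems(10)
  define OT where "OT = tedges Ot"
  define PT where "PT = tedges Pt"
  have dO: "distinct (leaves Ot)" using B_distinct[OF OB] .
  have dP: "distinct (leaves Pt)" using B_distinct[OF PB] .
  have lv: "set (leaves Pt) = set (leaves Ot)" using B_leaves[OF OB] B_leaves[OF PB] by simp
  have lvn: "\<And>i. i \<in> set (leaves Ot) \<Longrightarrow> i \<le> n" using B_leaves[OF OB] by auto
  have lpi: "\<And>i. i \<in> set (leaves Ot) \<Longrightarrow> depth Ot i \<le> L \<or> depth Pt i \<le> L \<Longrightarrow> depth Ot i = depth Pt i"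
    using lp unfolding LPp_def by blast
  have lpO: "\<And>i. i \<in> set (leaves Ot) \<Longrightarrow> depth Ot i \<le> L \<Longrightarrow> depth Ot i = depth Pt i" using lpi by blast
  have lpP: "\<And>i. i \<in> set (leaves Ot) \<Longrightarrow> depth Pt i \<le> L \<Longrightarrow> depth Ot i = depth Pt i" using lpi by blast
  define F where "F = (\<lambda>(\<sigma>::nat \<Rightarrow> 'a) i. if (x,i) \<in> OT\<^sup>* then \<phi> i else if depth Ot i \<le> L then \<sigma> (depth Ot i) else z (depth Ot i - Suc L))"
  define G where "G = (\<lambda>(\<sigma>::nat \<Rightarrow> 'a) i. if depth Ot i \<le> L then \<sigma> (depth Ot i) else z (depth Ot i - Suc L))"
  have FV: "\<And>\<sigma> i. (\<And>k. \<sigma> k \<in> V) \<Longrightarrow> F \<sigma> i \<in> V" unfolding F_def using \<phi>V zV by auto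
  have GV: "\<And>\<sigma> i. (\<And>k. \<sigma> k \<in> V) \<Longrightarrow> G \<sigma> i \<in> V" unfolding G_def using zV by auto
  have Oedge: "\<And>p i. (p,i) \<in> OT \<Longrightarrow> p \<in> set (leaves Ot) \<and> i \<in> set (leaves Ot) \<and> depth Ot i = Suc (depth Ot p)"
    unfolding OT_def using tedges_sub depth_edge[OF dO] by blast
  have Pedge: "\<And>p i. (p,i) \<in> PT \<Longrightarrow> p \<in> set (leaves Ot) \<and> i \<in> set (leaves Ot) \<and> depth Pt i = Suc (depth Pt p)"
    unfolding PT_def using tedges_sub depth_edge[OF dP] lv by blast
  have desc_depth: "\<And>i. (x,i) \<in> OT\<^sup>* \<Longrightarrow> i \<noteq> x \<Longrightarrow> depth Ot i > Suc L"
  proof -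
    fix i assume "(x,i) \<in> OT\<^sup>*" "i \<noteq> x"
    then obtain k where k: "(x,i) \<in> OT ^^ k" "k \<noteq> 0" using rtrancl_power by (metis relpow_0_E)
    then show "depth Ot i > Suc L" using depth_desc[OF dO xin, of i k] dx OT_def by simp
  qed
  have desc_depth': "\<And>i. (x,i) \<in> OT\<^sup>* \<Longrightarrow> depth Ot i \<ge> Suc L"
    using desc_depth dx by (metis less_imp_le order_refl)
  have desc_lt: "\<And>i. (x,i) \<in> OT\<^sup>* \<Longrightarrow> x \<le> i" using B_rtrancl_le[OF OB] OT_def by blast
  have desc_up: "\<And>p i. (p,i) \<in> OT \<Longrightarrow> (x,i) \<in> OT\<^sup>* \<Longrightarrow> i \<noteq> x \<Longrightarrow> (x,p) \<in> OT\<^sup>*"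
  proof -
    fix p i assume pi: "(p,i) \<in> OT" "(x,i) \<in> OT\<^sup>*" "i \<noteq> x"
    then obtain q where "(x,q) \<in> OT\<^sup>*" "(q,i) \<in> OT" by (metis rtranclE)
    moreover have "q = p" using tedges_upar[OF dO] pi(1) calculation(2) OT_def by blast
    ultimately show "(x,p) \<in> OT\<^sup>*" by simp
  qed
  obtain px where px: "(px, x) \<in> OT" "depth Ot px = L" using parent_ex[OF dO xin dx] OT_def by blast
  have px_not: "(x,px) \<notin> OT\<^sup>*" using desc_lt B_lt[OF OB, of px x] px(1) OT_def by fastforce
  have G_hom: "\<And>\<sigma>. (\<And>k. k < L \<Longrightarrow> (\<sigma> k, \<sigma> (Suc k)) \<in> E) \<Longrightarrow> (\<sigma> L, c) \<in> E \<Longrightarrow> ghom E (G \<sigma>) OT"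
  proof -
    fix \<sigma> :: "nat \<Rightarrow> 'a" assume sE: "\<And>k. k < L \<Longrightarrow> (\<sigma> k, \<sigma> (Suc k)) \<in> E" and sc: "(\<sigma> L, c) \<in> E"
    show "ghom E (G \<sigma>) OT" unfolding ghom_def
    proof (intro allI impI)
      fix p i assume "(p,i) \<in> OT"
      then have di: "depth Ot i = Suc (depth Ot p)" using Oedge by blast
      show "(G \<sigma> p, G \<sigma> i) \<in> E"
      proof (cases "depth Ot i \<le> L")
        case True
        then show ?thesis using di sE unfolding G_def by auto
      next
        case False
        show ?thesis
        proof (cases "depth Ot i = Suc L")
          case True
          then show ?thesis using di sc z0 unfolding G_def by auto
        next
          case False
          then have "depth Ot i - Suc L = Suc (depth Ot p - Suc L)" "\<not> depth Ot p \<le> L" using di \<open>\<not> depth Ot i \<le> L\<close> by auto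
          then show ?thesis using di zE \<open>\<not> depth Ot i \<le> L\<close> unfolding G_def by auto
        qed
      qed
    qed
  qed
  have F_eq_G: "\<And>\<sigma> i. (x,i) \<notin> OT\<^sup>* \<Longrightarrow> F \<sigma> i = G \<sigma> i" unfolding F_def G_def by auto
  have F_indep: "\<And>\<sigma> \<tau> i. (x,i) \<in> OT\<^sup>* \<or> \<not> depth Ot i \<le> L \<Longrightarrow> F \<sigma> i = F \<tau> i" unfolding F_def by auto
  have F_hom: "\<And>\<sigma>. (\<And>k. k < L \<Longrightarrow> (\<sigma> k, \<sigma> (Suc k)) \<in> E) \<Longrightarrow> (\<sigma> L, c) \<in> E \<Longrightarrow> (\<sigma> L, \<phi> x) \<in> E \<Longrightarrow> ghom E (F \<sigma>) OT"
  proof -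
    fix \<sigma> :: "nat \<Rightarrow> 'a" assume sE: "\<And>k. k < L \<Longrightarrow> (\<sigma> k, \<sigma> (Suc k)) \<in> E" and sc: "(\<sigma> L, c) \<in> E"
      and sx: "(\<sigma> L, \<phi> x) \<in> E"
    have Gh: "ghom E (G \<sigma>) OT" using G_hom sE sc by blast
    show "ghom E (F \<sigma>) OT" unfolding ghom_def
    proof (intro allI impI)
      fix p i assume pi: "(p,i) \<in> OT"
      show "(F \<sigma> p, F \<sigma> i) \<in> E"
      proof (cases "(x,i) \<in> OT\<^sup>*")
        case True
        show ?thesis
        proof (cases "i = x")
          case True
          then have "p = px" using tedges_upar[OF dO] pi px(1) OT_def by blast
          then show ?thesis using True px px_not sx unfolding F_def by auto
        next
          case False
          then have "(x,p) \<in> OT\<^sup>*" using desc_up pi \<open>(x,i) \<in> OT\<^sup>*\<close> by blast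
          then show ?thesis using \<phi>E pi \<open>(x,i) \<in> OT\<^sup>*\<close> OT_def unfolding F_def by auto
        qed
      next
        case False
        then have "(x,p) \<notin> OT\<^sup>*" using pi by (meson rtrancl.rtrancl_into_rtrancl)
        then show ?thesis using False Gh pi F_eq_G unfolding ghom_def by metis
      qed
    qed
  qed
  have FaV: "\<forall>i. F \<alpha> i \<in> V" using FV \<alpha>V by blast
  have FbV: "\<forall>i. F \<beta> i \<in> V" using FV \<beta>V by blast
  have GbV: "\<forall>i. G \<beta> i \<in> V" using GV \<beta>V by blast
  have h1: "ghom E (F \<alpha>) OT" using F_hom[of \<alpha>] \<alpha>E \<alpha>L ac a\<phi> by blast
  have h2: "ghom E (F \<alpha>) PT" using h1 SATpD[OF sat FaV] unfolding OT_def PT_def by blast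
  have "ghom E (G \<beta>) OT" using G_hom[of \<beta>] \<beta>E \<beta>L bc by blast
  then have h3: "ghom E (G \<beta>) PT" using SATpD[OF sat GbV] unfolding OT_def PT_def by blast
  have h4: "ghom E (F \<beta>) PT" unfolding ghom_def
  proof (intro allI impI)
    fix p i assume pi: "(p,i) \<in> PT"
    then have pl: "p \<in> set (leaves Ot)" and il: "i \<in> set (leaves Ot)" and di: "depth Pt i = Suc (depth Pt p)"
      using Pedge by auto
    show "(F \<beta> p, F \<beta> i) \<in> E"
    proof (cases "depth Pt i \<le> L")
      case True
      have e1a: "depth Ot i = depth Pt i" using lpi[OF il] True by blast
      have "depth Pt p \<le> L" using True di by simp
      then have e1b: "depth Ot p = depth Pt p" using lpi[OF pl] by blast
      note e1 = e1a e1b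
      have "(x,i) \<notin> OT\<^sup>*" using desc_depth' True e1a by fastforce
      moreover have "(x,p) \<notin> OT\<^sup>*" using desc_depth' \<open>depth Pt p \<le> L\<close> e1b by fastforce
      ultimately show ?thesis using e1 True di \<beta>E unfolding F_def by auto
    next
      case False
      note nle = False
      show ?thesis
      proof (cases "depth Pt i = Suc L")
        case True
        then have "depth Pt p = L" using di by simp
        then have dp: "depth Ot p = L" using lpP[OF pl] by simp
        then have "(x,p) \<notin> OT\<^sup>*" using desc_depth' by fastforce
        then have Fp: "F \<beta> p = b" "F \<alpha> p = a" using dp \<alpha>L \<beta>L unfolding F_def by auto
        have ndi: "\<not> depth Ot i \<le> L"
        proof
          assume a1: "depth Ot i \<le> L"
          then have "depth Ot i = depth Pt i" by (rule lpO[OF il])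
          then show False using a1 nle by simp
        qed
        then have Fi: "F \<beta> i = F \<alpha> i" using F_indep by blast
        show ?thesis
        proof (cases "(x,i) \<in> OT\<^sup>*")
          case True
          then have ix: "i \<noteq> x" using dPx \<open>depth Pt i = Suc L\<close> by auto
          then have dOi: "depth Ot i \<noteq> Suc L" using desc_depth True by fastforce
          have xi: "x < i" using desc_lt True ix by fastforce
          have lt: "n - i < n - x" using xi lvn[OF il] by simp
          have aF: "(a, F \<alpha> i) \<in> E" using h2 pi Fp unfolding ghom_def by metis
          have "(b, F \<alpha> i) \<in> E"
          proof (rule less.hyps[OF lt PB OB])
            show "SATp V E Pt Ot" using SATp_sym[OF sat] .
            show "LPp L Pt Ot" using LPp_sym[OF OB PB lp] .
            show "i \<in> set (leaves Pt)" using il lv by simp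
            show "depth Pt i = Suc L" by fact
            show "depth Ot i \<noteq> Suc L" by fact
            show "\<forall>i. F \<alpha> i \<in> V" using FaV by blast
            show "\<forall>p ia. (p, ia) \<in> tedges Pt \<longrightarrow> (i, p) \<in> (tedges Pt)\<^sup>* \<longrightarrow> (F \<alpha> p, F \<alpha> ia) \<in> E"
              using h2 unfolding ghom_def PT_def by blast
            show "(a, F \<alpha> i) \<in> E" by fact
          qed
          then show ?thesis using Fp Fi by simp
        next
          case False
          then have "F \<beta> i = G \<beta> i" using F_eq_G by blast
          moreover have "G \<beta> p = b" using dp \<beta>L unfolding G_def by simp
          ultimately show ?thesis using h3 pi Fp unfolding ghom_def by metis
        qed
      next
        case False
        then have "\<not> depth Pt p \<le> L" using nle di by simp
        have "\<not> depth Ot p \<le> L"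
        proof
          assume a1: "depth Ot p \<le> L"
          then have "depth Ot p = depth Pt p" by (rule lpO[OF pl])
          then show False using a1 \<open>\<not> depth Pt p \<le> L\<close> by simp
        qed
        moreover have "\<not> depth Ot i \<le> L"
        proof
          assume a1: "depth Ot i \<le> L"
          then have "depth Ot i = depth Pt i" by (rule lpO[OF il])
          then show False using a1 nle by simp
        qed
        ultimately have "F \<beta> p = F \<alpha> p" "F \<beta> i = F \<alpha> i" using F_indep by blast+
        then show ?thesis using h2 pi unfolding ghom_def by metis
      qed
    qed
  qed
  have h5: "ghom E (F \<beta>) OT" using h4 SATpD[OF sat FbV] unfolding OT_def PT_def by blast
  then have "(F \<beta> px, F \<beta> x) \<in> E" using px(1) unfolding ghom_def by blast
  moreover have "F \<beta> px = b" using px px_not \<beta>L unfolding F_def by simp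
  moreover have "F \<beta> x = \<phi> x" unfolding F_def by simp
  ultimately show ?case by simp
qed

lemma inf_walk:
  assumes cc: "(c,c) \<in> R\<^sup>+"
  shows "\<exists>z. z 0 = c \<and> (\<forall>k. (z k, z (Suc k)) \<in> R)"
proof -
  have step: "\<And>y. (y,c) \<in> R\<^sup>* \<Longrightarrow> \<exists>y'. (y,y') \<in> R \<and> (y',c) \<in> R\<^sup>*"
  proof -
    fix y assume "(y,c) \<in> R\<^sup>*"
    then have "(y,c) \<in> R\<^sup>+" using cc by (metis rtranclD)
    then show "\<exists>y'. (y,y') \<in> R \<and> (y',c) \<in> R\<^sup>*" using tranclD by metis
  qed
  define nxt where "nxt = (\<lambda>y. SOME y'. (y,y') \<in> R \<and> (y',c) \<in> R\<^sup>*)"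
  have nxt: "\<And>y. (y,c) \<in> R\<^sup>* \<Longrightarrow> (y, nxt y) \<in> R \<and> (nxt y, c) \<in> R\<^sup>*"
    unfolding nxt_def using step by (rule someI_ex)
  define z where "z = (\<lambda>k. (nxt ^^ k) c)"
  have inv: "\<And>k. (z k, c) \<in> R\<^sup>*"
  proof -
    fix k show "(z k, c) \<in> R\<^sup>*"
      by (induction k) (auto simp: z_def dest: nxt)
  qed
  have "\<forall>k. (z k, z (Suc k)) \<in> R" using nxt inv by (simp add: z_def)
  moreover have "z 0 = c" by (simp add: z_def)
  ultimately show ?thesis by blast
qed

lemma back_walk:
  assumes "(w,w) \<in> R\<^sup>+"
  shows "\<exists>\<beta>. \<beta> L = w \<and> (\<forall>k<L. (\<beta> k, \<beta> (Suc k)) \<in> R)"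
proof -
  have "(w,w) \<in> (R\<inverse>)\<^sup>+" using assms by (simp add: trancl_converse)
  then obtain y where y: "y 0 = w" "\<forall>k. (y k, y (Suc k)) \<in> R\<inverse>" using inf_walk by metis
  define \<beta> where "\<beta> = (\<lambda>k. y (L - k))"
  have "\<forall>k<L. (\<beta> k, \<beta> (Suc k)) \<in> R"
  proof (intro allI impI)
    fix k assume "k < L"
    then have "L - k = Suc (L - Suc k)" by simp
    then show "(\<beta> k, \<beta> (Suc k)) \<in> R" using y(2) unfolding \<beta>_def by (metis converse_iff)
  qed
  moreover have "\<beta> L = w" using y by (simp add: \<beta>_def)
  ultimately show ?thesis by blast
qed


lemma walk_V: assumes "E \<subseteq> V \<times> V" "walk V E v l" "i \<le> l" shows "v i \<in> V"
proof (cases i)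
  case 0
  then show ?thesis using assms(2) unfolding walk_def by simp
next
  case (Suc j)
  then have "(v j, v (Suc j)) \<in> E" using assms(2,3) unfolding walk_def by simp
  then show ?thesis using assms(1) Suc by blast
qed

theorem lemma6p29:
  fixes t t' :: bterm and n :: nat and V :: "'a set" and E :: "('a \<times> 'a) set"
  assumes "t \<in> B n" and "t' \<in> B n" and "t \<noteq> t'"
    and "E \<subseteq> V \<times> V"
    and "satisfies V E t t'"
    and "EG V E = ereal (real (Lt t t' + 1))"
  shows "(\<forall>u K w v. entryway V E u (Lt t t' + 1) K \<and> w \<in> K \<and> (w, u (Lt t t' + 1)) \<in> E
            \<and> walk V E v (lambdat t t')
          \<longrightarrow> ((w, v 0) \<in> E \<longleftrightarrow> (u (Lt t t'), v 0) \<in> E))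
       \<and> lambdaG V E < ereal (real (lambdat t t'))"
proof -
  note tB = assms(1) and t'B = assms(2) and EV = assms(4)
  obtain L where L: "Lt t t' = L" by blast
  obtain lam where lam: "lambdat t t' = lam" by blast
  have dt: "distinct (leaves t)" using B_distinct[OF tB] .
  have dt': "distinct (leaves t')" using B_distinct[OF t'B] .
  have lvs: "leaves t' = leaves t" using B_leaves[OF tB] B_leaves[OF t'B] by simp
  have lmt: "lm t = 1" using B_lm[OF tB] .
  have lmt': "lm t' = 1" using B_lm[OF t'B] .
  have SAT: "SATp V E t t'" unfolding SATp_def using sat_hom[OF assms(5)] lmt lmt' by simp
  define Q where "Q = (\<lambda>m. \<forall>x\<in>set (leaves t). (depth t x \<le> m \<or> depth t' x \<le> m) \<longrightarrow> depth t x = depth t' x)"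
  have Lt_eq: "Lt t t' = Greatest Q" unfolding Lt_def Q_def ..
  obtain x0 where x0: "x0 \<in> set (leaves t)" "depth t x0 \<noteq> depth t' x0"
    using depth_inj[OF dt lvs] assms(3) by blast
  have Q0: "Q 0" unfolding Q_def
  proof (intro ballI impI)
    fix x assume xl: "x \<in> set (leaves t)" and "depth t x \<le> 0 \<or> depth t' x \<le> 0"
    then have "depth t x = 0 \<or> depth t' x = 0" by simp
    moreover have xl': "x \<in> set (leaves t')" using xl lvs by simp
    ultimately have "x = 1" using depth0[OF dt xl] depth0[OF dt' xl'] lmt lmt' by auto
    then show "depth t x = depth t' x" using depth_root[of t] depth_root[of t'] lmt lmt' by simp
  qed
  have Qb: "\<And>y. Q y \<Longrightarrow> y \<le> depth t x0"
  proof -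
    fix y assume "Q y"
    then have "\<not> depth t x0 \<le> y" using x0 unfolding Q_def by blast
    then show "y \<le> depth t x0" by simp
  qed
  have QL: "Q L" using GreatestI_nat[of Q 0 "depth t x0", OF Q0 Qb] Lt_eq L by simp
  have nQ: "\<not> Q (Suc L)"
  proof
    assume "Q (Suc L)"
    then have "Suc L \<le> Greatest Q" using Greatest_le_nat[of Q "Suc L" "depth t x0"] Qb by blast
    then show False using Lt_eq L by simp
  qed
  obtain x1 where x1: "x1 \<in> set (leaves t)" "depth t x1 \<le> Suc L \<or> depth t' x1 \<le> Suc L" "depth t x1 \<noteq> depth t' x1"
    using nQ unfolding Q_def by blast
  have "\<not> (depth t x1 \<le> L \<or> depth t' x1 \<le> L)" using QL x1 unfolding Q_def by blast
  then have "x1 \<in> Lambda_set t t'" unfolding Lambda_set_def using x1 L by auto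
  then have Lne: "Lambda_set t t' \<noteq> {}" by blast
  have Lfin: "finite (Lambda_set t t')" unfolding Lambda_set_def by simp
  define h where "h = (\<lambda>x. max (subheight t x) (subheight t' x))"
  have "lam \<in> h ` Lambda_set t t'" using lam Min_in[of "h ` Lambda_set t t'"] Lfin Lne unfolding lambdat_def h_def by auto
  then obtain x where xL: "x \<in> Lambda_set t t'" and lamx: "lam = h x" by blast
  have xl: "x \<in> set (leaves t)" and xd: "depth t x \<noteq> depth t' x" and xs: "depth t x = Suc L \<or> depth t' x = Suc L"
    using xL L unfolding Lambda_set_def by auto
  have LP: "LPp L t t'" using QL unfolding Q_def LPp_def by blast
  have LP': "LPp L t' t" using LPp_sym[OF tB t'B LP] .
  have SAT': "SATp V E t' t" using SATp_sym[OF SAT] .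
  have P1: "\<And>u K w v. entryway V E u (Suc L) K \<Longrightarrow> w \<in> K \<Longrightarrow> (w, u (Suc L)) \<in> E \<Longrightarrow> walk V E v lam
      \<Longrightarrow> ((w, v 0) \<in> E \<longleftrightarrow> (u L, v 0) \<in> E)"
  proof -
    fix u K w v assume ent: "entryway V E u (Suc L) K" and wK: "w \<in> K" and wu: "(w, u (Suc L)) \<in> E"
      and vw: "walk V E v lam"
    have uw: "walk V E u (Suc L)" and Kn: "nontrivial_scc V E K" and uK: "u (Suc L) \<in> K"
      using ent unfolding entryway_def by auto
    obtain x0 where "x0 \<in> V" and K: "K = scc V E x0" using Kn unfolding nontrivial_scc_def is_scc_def by blast
    define c where "c = u (Suc L)"
    have uV: "\<And>i. i \<le> Suc L \<Longrightarrow> u i \<in> V" using walk_V[OF EV uw] by blast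
    have uE: "\<And>i. i < Suc L \<Longrightarrow> (u i, u (Suc i)) \<in> E" using uw unfolding walk_def by blast
    have wV: "w \<in> V" using wK K unfolding scc_def by blast
    have cw: "(c, w) \<in> E\<^sup>*" using uK wK K unfolding scc_def c_def by (blast intro: rtrancl_trans)
    have cc: "(c, c) \<in> E\<^sup>+" using cw wu c_def by (simp add: rtrancl_into_trancl1)
    have ww: "(w, w) \<in> E\<^sup>+" using cw wu c_def by (simp add: rtrancl_into_trancl2)
    obtain z where z0: "z 0 = c" and zE: "\<forall>k. (z k, z (Suc k)) \<in> E" using inf_walk[OF cc] by blast
    have zV: "\<And>k. z k \<in> V" using zE EV by blast
    have zE': "\<And>k. (z k, z (Suc k)) \<in> E" using zE by blast
    obtain \<beta>0 where \<beta>0L: "\<beta>0 L = w" and \<beta>0E: "\<forall>k<L. (\<beta>0 k, \<beta>0 (Suc k)) \<in> E" using back_walk[OF ww] by blast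
    define \<beta> where "\<beta> = (\<lambda>k. \<beta>0 (min k L))"
    define \<alpha> where "\<alpha> = (\<lambda>k. u (min k L))"
    have \<alpha>V: "\<And>k. \<alpha> k \<in> V" unfolding \<alpha>_def using uV by simp
    have \<alpha>E: "\<And>k. k < L \<Longrightarrow> (\<alpha> k, \<alpha> (Suc k)) \<in> E" unfolding \<alpha>_def using uE by simp
    have \<alpha>L: "\<alpha> L = u L" unfolding \<alpha>_def by simp
    have \<beta>V: "\<And>k. \<beta> k \<in> V"
    proof -
      fix k show "\<beta> k \<in> V"
      proof (cases "k < L")
        case True
        then show ?thesis using \<beta>0E EV unfolding \<beta>_def by auto
      next
        case False
        then show ?thesis using \<beta>0L wV unfolding \<beta>_def by simp
      qed
    qed
    have \<beta>E: "\<And>k. k < L \<Longrightarrow> (\<beta> k, \<beta> (Suc k)) \<in> E" unfolding \<beta>_def using \<beta>0E by simp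
    have \<beta>L: "\<beta> L = w" unfolding \<beta>_def using \<beta>0L by simp
    have ac: "(u L, c) \<in> E" using uE[of L] c_def by simp
    have bc: "(w, c) \<in> E" using wu c_def by simp
    have vV: "\<And>i. i \<le> lam \<Longrightarrow> v i \<in> V" using walk_V[OF EV vw] by blast
    have vE: "\<And>i. i < lam \<Longrightarrow> (v i, v (Suc i)) \<in> E" using vw unfolding walk_def by blast
    have main: "\<And>Ot Pt. Ot \<in> B n \<Longrightarrow> Pt \<in> B n \<Longrightarrow> SATp V E Ot Pt \<Longrightarrow> LPp L Ot Pt \<Longrightarrow> x \<in> set (leaves Ot)
        \<Longrightarrow> depth Ot x = Suc L \<Longrightarrow> depth Pt x \<noteq> Suc L \<Longrightarrow> subheight Ot x \<le> lam
        \<Longrightarrow> ((w, v 0) \<in> E \<longleftrightarrow> (u L, v 0) \<in> E)"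
    proof -
      fix Ot Pt assume OB: "Ot \<in> B n" and PB: "Pt \<in> B n" and sat: "SATp V E Ot Pt" and lp: "LPp L Ot Pt"
        and xO: "x \<in> set (leaves Ot)" and dx: "depth Ot x = Suc L" and dPx: "depth Pt x \<noteq> Suc L"
        and sh: "subheight Ot x \<le> lam"
      have dO: "distinct (leaves Ot)" using B_distinct[OF OB] .
      define \<phi> where "\<phi> = (\<lambda>i. v (min (depth Ot i - Suc L) lam))"
      have \<phi>V: "\<forall>i. \<phi> i \<in> V" unfolding \<phi>_def using vV by simp
      have \<phi>x: "\<phi> x = v 0" unfolding \<phi>_def using dx by simp
      have \<phi>E: "\<forall>p i. (p,i) \<in> tedges Ot \<longrightarrow> (x,p) \<in> (tedges Ot)\<^sup>* \<longrightarrow> (\<phi> p, \<phi> i) \<in> E"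
      proof (intro allI impI)
        fix p i assume pi: "(p,i) \<in> tedges Ot" and xp: "(x,p) \<in> (tedges Ot)\<^sup>*"
        obtain k where k: "(x,p) \<in> (tedges Ot) ^^ k" using xp rtrancl_power by blast
        have dp: "depth Ot p = Suc L + k" using depth_desc[OF dO xO k] dx by simp
        have "(x,i) \<in> (tedges Ot) ^^ Suc k" using k pi by (rule relpow_Suc_I)
        then have "Suc k \<le> subheight Ot x" by (rule subheight_ge[OF OB xO])
        then have kl: "Suc k \<le> lam" using sh by simp
        have di: "depth Ot i = Suc (depth Ot p)" using depth_edge[OF dO pi] .
        have "\<phi> p = v k" unfolding \<phi>_def using dp kl by simp
        moreover have "\<phi> i = v (Suc k)" unfolding \<phi>_def using dp di kl by simp
        ultimately show "(\<phi> p, \<phi> i) \<in> E" using vE kl by simp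
      qed
      have d1: "(u L, \<phi> x) \<in> E \<Longrightarrow> (w, \<phi> x) \<in> E"
        using key[OF \<alpha>V \<alpha>E \<alpha>L \<beta>V \<beta>E \<beta>L zV zE' z0 ac bc OB PB sat lp xO dx dPx \<phi>V \<phi>E] by blast
      have d2: "(w, \<phi> x) \<in> E \<Longrightarrow> (u L, \<phi> x) \<in> E"
        using key[OF \<beta>V \<beta>E \<beta>L \<alpha>V \<alpha>E \<alpha>L zV zE' z0 bc ac OB PB sat lp xO dx dPx \<phi>V \<phi>E] by blast
      show "((w, v 0) \<in> E \<longleftrightarrow> (u L, v 0) \<in> E)" using d1 d2 \<phi>x by auto
    qed
    show "((w, v 0) \<in> E \<longleftrightarrow> (u L, v 0) \<in> E)"
    proof (cases "depth t x = Suc L")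
      case True
      then have "depth t' x \<noteq> Suc L" using xd by simp
      moreover have "subheight t x \<le> lam" using lamx unfolding h_def by simp
      ultimately show ?thesis using main[OF tB t'B SAT LP xl True] by blast
    next
      case False
      then have "depth t' x = Suc L" using xs by simp
      moreover have "subheight t' x \<le> lam" using lamx unfolding h_def by simp
      moreover have "x \<in> set (leaves t')" using xl lvs by simp
      ultimately show ?thesis using main[OF t'B tB SAT' LP'] False by blast
    qed
  qed
  have part1: "\<forall>u K w v. entryway V E u (Lt t t' + 1) K \<and> w \<in> K \<and> (w, u (Lt t t' + 1)) \<in> E
            \<and> walk V E v (lambdat t t')
          \<longrightarrow> ((w, v 0) \<in> E \<longleftrightarrow> (u (Lt t t'), v 0) \<in> E)"
    unfolding L lam Suc_eq_plus1[symmetric] using P1 by blast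
  have part2: "lambdaG V E \<le> ereal (real lam - 1)"
    unfolding lambdaG_def
  proof (rule Sup_least)
    fix s assume "s \<in> {ereal (real m) |m. \<exists>u l K w v.
      ereal (real l) = EG V E \<and> 1 \<le> l \<and> entryway V E u l K \<and> w \<in> K \<and>
      (w, u l) \<in> E \<and> walk V E v m \<and>
      (((w, v 0) \<in> E) \<noteq> ((u (l - 1), v 0) \<in> E))}"
    then obtain m u l K w v where s: "s = ereal (real m)" and l: "ereal (real l) = EG V E"
      and ent: "entryway V E u l K" and wK: "w \<in> K" and wu: "(w, u l) \<in> E" and vw: "walk V E v m"
      and xor: "((w, v 0) \<in> E) \<noteq> ((u (l - 1), v 0) \<in> E)" by blast
    have "l = Suc L" using l assms(6) L by simp
    have "m < lam"
    proof (rule ccontr)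
      assume "\<not> m < lam"
      then have "walk V E v lam" using vw unfolding walk_def by auto
      then have "((w, v 0) \<in> E \<longleftrightarrow> (u L, v 0) \<in> E)"
        using P1[of u K w v] ent wK wu \<open>l = Suc L\<close> by simp
      then show False using xor \<open>l = Suc L\<close> by simp
    qed
    then show "s \<le> ereal (real lam - 1)" using s by simp
  qed
  have "ereal (real lam - 1) < ereal (real lam)" by simp
  then have "lambdaG V E < ereal (real (lambdat t t'))" using part2 lam by (meson order_le_less_trans)
  then show ?thesis using part1 by blast
qed

end
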